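(* Let $Z\subseteq(\mathbb P^1)^d$ be the common vanishing locus of the multi-homogenizations $P^h$ of all linear forms $P=\sum_{\lambda\in\Phi^+}c_\lambda x_\lambda$ vanishing on $\mathfrak h$ (i.e. with $\sum_\lambda c_\lambda\lambda=0$). Then $Z=\bar{\mathfrak h}$ as sets.
   Context: Let $\mathfrak g$ be a complex semisimple Lie algebra, $\mathfrak h$ a Cartan subalgebra, $\Phi\subset\mathfrak h^*$ its root system, $\Phi^+$ a fixed set of positive roots, $d=|\Phi^+|$. Identify $\mathbb C$ with $\{[x_0:x_1]:x_0\ne0\}\subset\mathbb P^1$ via $c\mapsto[1:c]$, $\infty=[0:1]$, and write points of $(\mathbb P^1)^d$ as $(x_\lambda)_{\lambda\in\Phi^+}$, $x_\lambda=[x_{\lambda,0}:x_{\lambda,1}]$. Identify $\mathfrak h$ with its image under the injective linear map $h\mapsto(\lambda(h))_{\lambda\in\Phi^+}\in\mathbb C^d\subset(\mathbb P^1)^d$; $\bar{\mathfrak h}$ (the wonderful compactification of $\mathfrak h$) denotes the Zariski closure of $\mathfrak h$ in $(\mathbb P^1)^d$. For a linear form $P$ with support $\mathrm{supp}(P)=\{\lambda:c_\lambda\ne0\}$, $P^h=\sum_{\lambda\in\mathrm{supp}P}c_\lambda x_{\lambda,1}\prod_{\mu\in\mathrm{supp}P,\mu\ne\lambda}x_{\mu,0}$. *)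

theory Defs
  imports "HOL-Analysis.Analysis"
begin

text \<open>The roots of a complex semisimple Lie algebra with respect to a Cartan subalgebra
  form a reduced crystallographic root system in the real form of the dual of the Cartan
  subalgebra; conversely every such root system arises this way. We model the real form of
  the dual of the Cartan subalgebra as the Euclidean space real^'n.\<close>

definition root_system :: "(real ^ 'n) set \<Rightarrow> bool" where
  "root_system \<Phi> \<longleftrightarrow>
     finite \<Phi> \<and> 0 \<notin> \<Phi> \<and> span \<Phi> = UNIV \<and>
     (\<forall>\<alpha>\<in>\<Phi>. \<forall>\<beta>\<in>\<Phi>. \<beta> - (2 * (\<beta> \<bullet> \<alpha>) / (\<alpha> \<bullet> \<alpha>)) *\<^sub>R \<alpha> \<in> \<Phi>) \<and>
     (\<forall>\<alpha>\<in>\<Phi>. \<forall>\<beta>\<in>\<Phi>. 2 * (\<beta> \<bullet> \<alpha>) / (\<alpha> \<bullet> \<alpha>) \<in> \<int>) \<and>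
     (\<forall>\<alpha>\<in>\<Phi>. \<forall>c::real. c *\<^sub>R \<alpha> \<in> \<Phi> \<longrightarrow> c = 1 \<or> c = -1)"

definition positive_system :: "(real ^ 'n) set \<Rightarrow> (real ^ 'n) set \<Rightarrow> bool" where
  "positive_system \<Phi> \<Phi>p \<longleftrightarrow>
     (\<exists>v. (\<forall>\<alpha>\<in>\<Phi>. v \<bullet> \<alpha> \<noteq> 0) \<and> \<Phi>p = {\<alpha>\<in>\<Phi>. v \<bullet> \<alpha> > 0})"

text \<open>Evaluation of a root (a real linear form) at an element h of the complex Cartan
  subalgebra complex^'n.\<close>
definition root_eval :: "real ^ 'n \<Rightarrow> complex ^ 'n \<Rightarrow> complex" where
  "root_eval \<gamma> h = (\<Sum>i\<in>UNIV. complex_of_real (\<gamma> $ i) * h $ i)"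

text \<open>A point of (P^1)^I (I finite) is represented by homogeneous coordinates
  x i = (x_{i,0}, x_{i,1}) \<noteq> (0,0) for i in I; outside I we normalise to (0,0).
  Subsets of (P^1)^I are represented by the (scaling-invariant) sets of all their
  representatives.\<close>

definition P1pts :: "'a set \<Rightarrow> ('a \<Rightarrow> complex \<times> complex) set" where
  "P1pts I = {x. (\<forall>i\<in>I. x i \<noteq> (0, 0)) \<and> (\<forall>i. i \<notin> I \<longrightarrow> x i = (0, 0))}"

text \<open>Polynomials in the variables x_{i,0} (= (i,False)) and x_{i,1} (= (i,True)):
  coefficient functions on exponent vectors with finite support.\<close>

definition mhpoly :: "'a set \<Rightarrow> (('a \<times> bool \<Rightarrow> nat) \<Rightarrow> complex) \<Rightarrow> bool" where
  "mhpoly I p \<longleftrightarrow> finite {m. p m \<noteq> 0} \<and>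
     (\<exists>deg. \<forall>m. p m \<noteq> 0 \<longrightarrow>
        (\<forall>i\<in>I. m (i, False) + m (i, True) = deg i) \<and>
        (\<forall>i. i \<notin> I \<longrightarrow> m (i, False) = 0 \<and> m (i, True) = 0))"

definition mh_eval :: "'a set \<Rightarrow> (('a \<times> bool \<Rightarrow> nat) \<Rightarrow> complex) \<Rightarrow> ('a \<Rightarrow> complex \<times> complex) \<Rightarrow> complex" where
  "mh_eval I p x = (\<Sum>m | p m \<noteq> 0. p m * (\<Prod>i\<in>I. fst (x i) ^ m (i, False) * snd (x i) ^ m (i, True)))"

definition zero_set :: "'a set \<Rightarrow> (('a \<times> bool \<Rightarrow> nat) \<Rightarrow> complex) set \<Rightarrow> ('a \<Rightarrow> complex \<times> complex) set" where
  "zero_set I S = {x \<in> P1pts I. \<forall>p\<in>S. mh_eval I p x = 0}"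

definition zariski_closed :: "'a set \<Rightarrow> ('a \<Rightarrow> complex \<times> complex) set \<Rightarrow> bool" where
  "zariski_closed I C \<longleftrightarrow> (\<exists>S. (\<forall>p\<in>S. mhpoly I p) \<and> C = zero_set I S)"

definition zariski_closure :: "'a set \<Rightarrow> ('a \<Rightarrow> complex \<times> complex) set \<Rightarrow> ('a \<Rightarrow> complex \<times> complex) set" where
  "zariski_closure I A = \<Inter>{C. zariski_closed I C \<and> A \<subseteq> C}"

text \<open>All representatives of the points (lambda(h))_{lambda in Phi+}, h in the Cartan
  subalgebra, where c in C is identified with [1:c].\<close>
definition cartan_in_P1 :: "(real ^ 'n) set \<Rightarrow> (real ^ 'n \<Rightarrow> complex \<times> complex) set" where
  "cartan_in_P1 \<Phi>p = {x \<in> P1pts \<Phi>p. \<exists>h :: complex ^ 'n.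
      \<forall>\<gamma>\<in>\<Phi>p. \<exists>t. t \<noteq> 0 \<and> x \<gamma> = (t, t * root_eval \<gamma> h)}"

text \<open>Multi-homogenization P^h of the linear form P = sum c_lambda x_lambda, evaluated
  at homogeneous coordinates x.\<close>
definition homogenize_eval :: "(real ^ 'n) set \<Rightarrow> (real ^ 'n \<Rightarrow> complex) \<Rightarrow> (real ^ 'n \<Rightarrow> complex \<times> complex) \<Rightarrow> complex" where
  "homogenize_eval \<Phi>p c x =
     (let S = {\<gamma>\<in>\<Phi>p. c \<gamma> \<noteq> 0} in
      \<Sum>\<gamma>\<in>S. c \<gamma> * snd (x \<gamma>) * (\<Prod>\<mu>\<in>S - {\<gamma>}. fst (x \<mu>)))"

definition Zset :: "(real ^ 'n) set \<Rightarrow> (real ^ 'n \<Rightarrow> complex \<times> complex) set" where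
  "Zset \<Phi>p = {x \<in> P1pts \<Phi>p. \<forall>c :: real ^ 'n \<Rightarrow> complex.
      (\<forall>h :: complex ^ 'n. (\<Sum>\<gamma>\<in>\<Phi>p. c \<gamma> * root_eval \<gamma> h) = 0) \<longrightarrow>
      homogenize_eval \<Phi>p c x = 0}"

end

theory Submission
  imports Defs
begin


lemma solve_real:
  fixes F :: "(real ^ 'n) set" and a :: "real ^ 'n \<Rightarrow> real"
  assumes fin: "finite F"
    and cond: "\<And>c. (\<Sum>l\<in>F. c l *\<^sub>R l) = 0 \<Longrightarrow> (\<Sum>l\<in>F. c l * a l) = 0"
  shows "\<exists>w. \<forall>l\<in>F. l \<bullet> w = a l"
proof -
  obtain B where B: "B \<subseteq> F" "independent B" "F \<subseteq> span B"
    using maximal_independent_subset by blast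
  have finB: "finite B" using B(1) fin finite_subset by blast
  obtain g :: "real ^ 'n \<Rightarrow> real" where g: "linear g" "\<forall>b\<in>B. g b = a b"
    using linear_independent_extend[OF B(2)] by blast
  have ga: "g l = a l" if l: "l \<in> F" for l
  proof -
    have "l \<in> span B" using l B(3) by blast
    then obtain u where u: "(\<Sum>b\<in>B. u b *\<^sub>R b) = l"
      using span_finite[OF finB] by auto
    define c where "c = (\<lambda>m. (if m \<in> B then u m else 0) - (if m = l then 1 else 0))"
    have s1: "(\<Sum>m\<in>F. (if m \<in> B then u m else 0) *\<^sub>R m) = (\<Sum>b\<in>B. u b *\<^sub>R b)"
    proof -
      have "(\<Sum>m\<in>F. (if m \<in> B then u m else 0) *\<^sub>R m) = (\<Sum>m\<in>F. if m \<in> B then u m *\<^sub>R m else 0)"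
        by (rule sum.cong) auto
      also have "\<dots> = (\<Sum>m\<in>F \<inter> B. u m *\<^sub>R m)" using fin by (simp add: sum.inter_restrict)
      finally show ?thesis using B(1) by (simp add: Int_absorb1)
    qed
    have s2: "(\<Sum>m\<in>F. (if m \<in> B then u m else 0) * a m) = (\<Sum>b\<in>B. u b * a b)"
    proof -
      have "(\<Sum>m\<in>F. (if m \<in> B then u m else 0) * a m) = (\<Sum>m\<in>F. if m \<in> B then u m * a m else 0)"
        by (rule sum.cong) auto
      also have "\<dots> = (\<Sum>m\<in>F \<inter> B. u m * a m)" using fin by (simp add: sum.inter_restrict)
      finally show ?thesis using B(1) by (simp add: Int_absorb1)
    qed
    have d1: "(\<Sum>m\<in>F. (if m = l then 1 else 0) *\<^sub>R m) = l"
    proof -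
      have "(\<Sum>m\<in>F. (if m = l then 1 else 0) *\<^sub>R m) = (\<Sum>m\<in>F. if m = l then m else 0)"
        by (rule sum.cong) auto
      thus ?thesis using l fin by simp
    qed
    have d2: "(\<Sum>m\<in>F. (if m = l then 1 else 0) * a m) = a l"
    proof -
      have "(\<Sum>m\<in>F. (if m = l then 1 else 0) * a m) = (\<Sum>m\<in>F. if m = l then a m else 0)"
        by (rule sum.cong) auto
      thus ?thesis using l fin by simp
    qed
    have "(\<Sum>m\<in>F. c m *\<^sub>R m) = (\<Sum>m\<in>F. (if m \<in> B then u m else 0) *\<^sub>R m) - (\<Sum>m\<in>F. (if m = l then 1 else 0) *\<^sub>R m)"
      unfolding c_def by (simp add: scaleR_diff_left sum_subtractf)
    also have "\<dots> = 0" using s1 u d1 by simp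
    finally have "(\<Sum>m\<in>F. c m * a m) = 0" by (rule cond)
    moreover have "(\<Sum>m\<in>F. c m * a m) = (\<Sum>b\<in>B. u b * a b) - a l"
      unfolding c_def using s2 d2 by (simp add: left_diff_distrib sum_subtractf)
    ultimately have "(\<Sum>b\<in>B. u b * a b) = a l" by simp
    moreover have "g l = (\<Sum>b\<in>B. u b * g b)"
    proof -
      have "g l = (\<Sum>b\<in>B. g (u b *\<^sub>R b))" using u linear_sum[OF g(1)] by metis
      also have "\<dots> = (\<Sum>b\<in>B. u b * g b)" using linear_scale[OF g(1)] by simp
      finally show ?thesis .
    qed
    ultimately show ?thesis using g(2) by simp
  qed
  show ?thesis
  proof (intro exI ballI)
    fix l assume "l \<in> F"
    have "l \<bullet> adjoint g 1 = g l \<bullet> 1" by (rule adjoint_works[OF g(1)])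
    also have "\<dots> = g l" by simp
    finally show "l \<bullet> adjoint g 1 = a l" using ga \<open>l \<in> F\<close> by simp
  qed
qed

lemma sep_real:
  fixes F :: "(real ^ 'n) set"
  assumes fin: "finite F" and mu: "mu \<notin> span F"
  shows "\<exists>w. (\<forall>l\<in>F. l \<bullet> w = 0) \<and> mu \<bullet> w = 1"
proof -
  have muF: "mu \<notin> F" using mu span_base by blast
  define a where "a = (\<lambda>l::real^'n. if l = mu then (1::real) else 0)"
  have "\<exists>w. \<forall>l\<in>insert mu F. l \<bullet> w = a l"
  proof (rule solve_real)
    show "finite (insert mu F)" using fin by simp
    fix c assume c: "(\<Sum>l\<in>insert mu F. c l *\<^sub>R l) = 0"
    have "c mu = 0"
    proof (rule ccontr)
      assume nz: "c mu \<noteq> 0"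
      have e: "c mu *\<^sub>R mu + (\<Sum>l\<in>F. c l *\<^sub>R l) = 0" using c fin muF by simp
      have e2: "c mu *\<^sub>R mu = - (\<Sum>l\<in>F. c l *\<^sub>R l)" using e by (simp add: eq_neg_iff_add_eq_0)
      have "mu = (1 / c mu) *\<^sub>R (c mu *\<^sub>R mu)" using nz by simp
      also have "\<dots> = (1 / c mu) *\<^sub>R (- (\<Sum>l\<in>F. c l *\<^sub>R l))" by (simp only: e2)
      finally have mu_eq: "mu = (1 / c mu) *\<^sub>R (- (\<Sum>l\<in>F. c l *\<^sub>R l))" .
      have X: "(1 / c mu) *\<^sub>R (- (\<Sum>l\<in>F. c l *\<^sub>R l)) \<in> span F"
        by (intro span_scale span_neg span_sum span_base)
      have "mu \<in> span F" using X mu_eq by metis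
      thus False using mu by blast
    qed
    moreover have "(\<Sum>l\<in>F. c l * a l) = 0"
      by (rule sum.neutral) (use muF in \<open>auto simp: a_def\<close>)
    ultimately show "(\<Sum>l\<in>insert mu F. c l * a l) = 0" using fin muF by simp
  qed
  then obtain w where w: "\<forall>l\<in>insert mu F. l \<bullet> w = a l" by blast
  have "\<forall>l\<in>F. l \<bullet> w = 0" using w muF unfolding a_def by (metis insertCI)
  moreover have "mu \<bullet> w = 1" using w unfolding a_def by simp
  ultimately show ?thesis by blast
qed



definition cv :: "real ^ 'n \<Rightarrow> complex ^ 'n" where
  "cv w = (\<chi> i. complex_of_real (w $ i))"

lemma re_lin: "root_eval g (\<chi> i. h $ i + s * k $ i) = root_eval g h + s * root_eval g k"
  by (simp add: root_eval_def sum.distrib sum_distrib_left algebra_simps)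

lemma re_real: "root_eval g (cv w) = complex_of_real (g \<bullet> w)"
  by (simp add: root_eval_def cv_def inner_vec_def)

lemma re_sum_zero:
  fixes c :: "real ^ 'n \<Rightarrow> real"
  assumes "(\<Sum>g\<in>P. c g *\<^sub>R g) = 0"
  shows "(\<Sum>g\<in>P. complex_of_real (c g) * root_eval g h) = 0"
proof -
  have "(\<Sum>g\<in>P. complex_of_real (c g) * root_eval g h)
      = (\<Sum>i\<in>UNIV. (\<Sum>g\<in>P. complex_of_real (c g) * complex_of_real (g $ i)) * h $ i)"
    by (simp add: root_eval_def sum_distrib_left sum_distrib_right sum.swap[of _ P] mult.assoc)
  also have "\<dots> = (\<Sum>i\<in>UNIV. complex_of_real ((\<Sum>g\<in>P. c g *\<^sub>R g) $ i) * h $ i)"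
    by simp
  also have "\<dots> = 0" using assms by simp
  finally show ?thesis .
qed

lemma hom_eq: "homogenize_eval P c x =
   (\<Sum>g\<in>{g\<in>P. c g \<noteq> 0}. c g * snd (x g) * (\<Prod>m\<in>{g\<in>P. c g \<noteq> 0} - {g}. fst (x m)))"
  by (simp add: homogenize_eval_def Let_def)

lemma hom_finite:
  assumes fin: "finite P" and nz: "\<forall>g\<in>{g\<in>P. c g \<noteq> 0}. fst (x g) \<noteq> 0"
  shows "homogenize_eval P c x = (\<Prod>g\<in>{g\<in>P. c g \<noteq> 0}. fst (x g)) *
     (\<Sum>g\<in>{g\<in>P. c g \<noteq> 0}. c g * (snd (x g) / fst (x g)))"
proof -
  let ?S = "{g\<in>P. c g \<noteq> 0}"
  have finS: "finite ?S" using fin by simp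
  show ?thesis unfolding hom_eq sum_distrib_left
  proof (rule sum.cong[OF refl])
    fix g assume g: "g \<in> ?S"
    have "(\<Prod>g\<in>?S. fst (x g)) = fst (x g) * (\<Prod>m\<in>?S - {g}. fst (x m))"
      using prod.remove[OF finS g] .
    thus "c g * snd (x g) * (\<Prod>m\<in>?S - {g}. fst (x m)) =
        (\<Prod>g\<in>?S. fst (x g)) * (c g * (snd (x g) / fst (x g)))"
      using nz g by (simp add: field_simps)
  qed
qed

lemma zero_lim:
  fixes f :: "complex \<Rightarrow> complex"
  assumes "isCont f 0" "\<forall>u. u \<noteq> 0 \<longrightarrow> f u = 0"
  shows "f 0 = 0"
proof -
  have 1: "(f \<longlongrightarrow> f 0) (at 0)" using assms(1) isCont_def by blast
  have "\<forall>\<^sub>F u in at 0. f u = 0" using assms(2) by (auto simp: eventually_at_filter)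
  hence 2: "(f \<longlongrightarrow> 0) (at 0)" by (rule tendsto_eventually)
  show ?thesis using tendsto_unique[OF _ 1 2] by simp
qed

lemma curve_closure:
  fixes x :: "real ^ 'n \<Rightarrow> complex \<times> complex" and A B :: "real ^ 'n \<Rightarrow> complex \<Rightarrow> complex"
  assumes xP: "x \<in> P1pts P"
    and cA: "\<And>g. isCont (A g) 0" and cB: "\<And>g. isCont (B g) 0"
    and x0: "\<And>g. x g = (A g 0, B g 0)"
    and cart: "\<And>u. u \<noteq> 0 \<Longrightarrow> (\<lambda>g. (A g u, B g u)) \<in> cartan_in_P1 P"
  shows "x \<in> zariski_closure P (cartan_in_P1 P)"
  unfolding zariski_closure_def
proof (rule InterI)
  fix C assume "C \<in> {C. zariski_closed P C \<and> cartan_in_P1 P \<subseteq> C}"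
  hence Cc: "zariski_closed P C" and sub: "cartan_in_P1 P \<subseteq> C" by auto
  obtain S where S: "\<forall>p\<in>S. mhpoly P p" "C = zero_set P S" using Cc zariski_closed_def by blast
  have "\<forall>p\<in>S. mh_eval P p x = 0"
  proof
    fix p assume p: "p \<in> S"
    define f where "f u = mh_eval P p (\<lambda>g. (A g u, B g u))" for u
    have "\<forall>u. u \<noteq> 0 \<longrightarrow> f u = 0"
      using cart sub S(2) p unfolding f_def zero_set_def by blast
    moreover have "isCont f 0"
      unfolding f_def mh_eval_def fst_conv snd_conv
      by (intro continuous_intros cA cB)
    ultimately have "f 0 = 0" using zero_lim by blast
    moreover have "(\<lambda>g. (A g 0, B g 0)) = x" using x0 by auto
    ultimately show "mh_eval P p x = 0" unfolding f_def by simp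
  qed
  thus "x \<in> C" using S(2) xP unfolding zero_set_def by blast
qed

lemma generic:
  assumes "finite T"
    and "\<forall>m\<in>T. \<exists>h. (\<forall>l\<in>F. root_eval l h = 0) \<and> root_eval m h \<noteq> 0"
  shows "\<exists>h. (\<forall>l\<in>F. root_eval l h = 0) \<and> (\<forall>m\<in>T. root_eval m h \<noteq> 0)"
  using assms
proof (induction T rule: finite_induct)
  case empty
  show ?case by (rule exI[of _ 0]) (simp add: root_eval_def)
next
  case (insert v T)
  then obtain h where h: "\<forall>l\<in>F. root_eval l h = 0" "\<forall>m\<in>T. root_eval m h \<noteq> 0" by auto
  obtain k where k: "\<forall>l\<in>F. root_eval l k = 0" "root_eval v k \<noteq> 0" using insert.prems by auto
  let ?Bd = "(\<lambda>m. - root_eval m h / root_eval m k) ` insert v T"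
  have "finite ?Bd" using insert.hyps by simp
  then obtain s :: complex where s: "s \<notin> ?Bd"
    using ex_new_if_finite[OF infinite_UNIV_char_0] by blast
  define h' where "h' = (\<chi> i. h $ i + s * k $ i)"
  show ?case
  proof (intro exI conjI ballI)
    fix l assume "l \<in> F" thus "root_eval l h' = 0" using h k by (simp add: h'_def re_lin)
  next
    fix m assume m: "m \<in> insert v T"
    have alt: "root_eval m h \<noteq> 0 \<or> root_eval m k \<noteq> 0" using m h k by auto
    show "root_eval m h' \<noteq> 0"
    proof
      assume "root_eval m h' = 0"
      hence e: "root_eval m h + s * root_eval m k = 0" by (simp add: h'_def re_lin)
      show False
      proof (cases "root_eval m k = 0")
        case True thus False using e alt by simp
      next
        case False
        hence "s = - root_eval m h / root_eval m k" using e by (simp add: field_simps add_eq_0_iff)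
        thus False using s m by blast
      qed
    qed
  qed
qed




definition mon :: "(real ^ 'n) set \<Rightarrow> (real ^ 'n \<Rightarrow> complex) \<Rightarrow> real ^ 'n \<Rightarrow> ((real ^ 'n) \<times> bool \<Rightarrow> nat)" where
  "mon P c g = (\<lambda>(i, b). if b then (if i = g then 1 else 0)
                         else (if i \<in> {g\<in>P. c g \<noteq> 0} \<and> i \<noteq> g then 1 else 0))"

definition pc :: "(real ^ 'n) set \<Rightarrow> (real ^ 'n \<Rightarrow> complex) \<Rightarrow> ((real ^ 'n) \<times> bool \<Rightarrow> nat) \<Rightarrow> complex" where
  "pc P c m = (\<Sum>g\<in>{g\<in>P. c g \<noteq> 0}. if m = mon P c g then c g else 0)"

lemma mon_eq_iff: "mon P c g = mon P c g' \<longleftrightarrow> g = g'"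
proof
  assume "mon P c g = mon P c g'"
  hence "mon P c g (g, True) = mon P c g' (g, True)" by simp
  thus "g = g'" by (simp add: mon_def split: if_splits)
qed simp

lemma pc_mon: assumes "finite P" "g \<in> {g\<in>P. c g \<noteq> 0}" shows "pc P c (mon P c g) = c g"
proof -
  have "pc P c (mon P c g) = (\<Sum>g'\<in>{g\<in>P. c g \<noteq> 0}. if g = g' then c g' else 0)"
    unfolding pc_def by (rule sum.cong) (auto simp: mon_eq_iff)
  thus ?thesis using assms by simp
qed

lemma pc_supp: assumes "finite P" shows "{m. pc P c m \<noteq> 0} = mon P c ` {g\<in>P. c g \<noteq> 0}"
proof
  show "{m. pc P c m \<noteq> 0} \<subseteq> mon P c ` {g\<in>P. c g \<noteq> 0}"
  proof
    fix m assume "m \<in> {m. pc P c m \<noteq> 0}"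
    hence "pc P c m \<noteq> 0" by simp
    have "\<exists>g\<in>{g\<in>P. c g \<noteq> 0}. (if m = mon P c g then c g else 0) \<noteq> 0"
    proof (rule ccontr)
      assume "\<not> ?thesis"
      hence "pc P c m = 0" unfolding pc_def by (intro sum.neutral) blast
      thus False using \<open>pc P c m \<noteq> 0\<close> by simp
    qed
    then obtain g where "g \<in> {g\<in>P. c g \<noteq> 0}" "(if m = mon P c g then c g else 0) \<noteq> 0" by blast
    thus "m \<in> mon P c ` {g\<in>P. c g \<noteq> 0}" by (auto split: if_splits)
  qed
next
  show "mon P c ` {g\<in>P. c g \<noteq> 0} \<subseteq> {m. pc P c m \<noteq> 0}"
    using pc_mon[OF assms] by auto
qed



lemma mon_prod:
  assumes fin: "finite P" and g: "g \<in> {g\<in>P. c g \<noteq> 0}"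
  shows "(\<Prod>i\<in>P. fst (x i) ^ mon P c g (i, False) * snd (x i) ^ mon P c g (i, True))
       = snd (x g) * (\<Prod>m\<in>{g\<in>P. c g \<noteq> 0} - {g}. fst (x m))"
proof -
  let ?S = "{g\<in>P. c g \<noteq> 0}"
  have 1: "(\<Prod>i\<in>P. fst (x i) ^ mon P c g (i, False)) = (\<Prod>i\<in>P. if i \<in> ?S - {g} then fst (x i) else 1)"
    by (rule prod.cong) (auto simp: mon_def)
  have 2: "(\<Prod>i\<in>P. if i \<in> ?S - {g} then fst (x i) else 1) = (\<Prod>i\<in>P \<inter> (?S - {g}). fst (x i))"
    using fin by (simp add: prod.inter_restrict)
  have 3: "P \<inter> (?S - {g}) = ?S - {g}" by auto
  have 4: "(\<Prod>i\<in>P. snd (x i) ^ mon P c g (i, True)) = (\<Prod>i\<in>P. if i = g then snd (x i) else 1)"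
    by (rule prod.cong) (auto simp: mon_def)
  have 5: "(\<Prod>i\<in>P. if i = g then snd (x i) else 1) = snd (x g)"
    using fin g by (simp add: prod.delta)
  show ?thesis unfolding prod.distrib 1 2 3 4 5 by (simp add: mult.commute)
qed

lemma pc_eval: assumes fin: "finite P" shows "mh_eval P (pc P c) x = homogenize_eval P c x"
proof -
  let ?S = "{g\<in>P. c g \<noteq> 0}"
  have inj: "inj_on (mon P c) ?S" by (auto simp: inj_on_def mon_eq_iff)
  have "mh_eval P (pc P c) x = (\<Sum>m\<in>mon P c ` ?S. pc P c m *
      (\<Prod>i\<in>P. fst (x i) ^ m (i, False) * snd (x i) ^ m (i, True)))"
    unfolding mh_eval_def pc_supp[OF fin] ..
  also have "\<dots> = (\<Sum>g\<in>?S. pc P c (mon P c g) *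
      (\<Prod>i\<in>P. fst (x i) ^ mon P c g (i, False) * snd (x i) ^ mon P c g (i, True)))"
    by (rule sum.reindex[OF inj, unfolded comp_def])
  also have "\<dots> = (\<Sum>g\<in>?S. c g * snd (x g) * (\<Prod>m\<in>?S - {g}. fst (x m)))"
    by (rule sum.cong) (auto simp: pc_mon[OF fin] mon_prod[OF fin])
  finally show ?thesis by (simp add: hom_eq)
qed



lemma pc_mhpoly: assumes fin: "finite P" shows "mhpoly P (pc P c)"
proof -
  have 1: "finite {m. pc P c m \<noteq> 0}" using fin by (simp add: pc_supp)
  have 2: "\<forall>m. pc P c m \<noteq> 0 \<longrightarrow>
        (\<forall>i\<in>P. m (i, False) + m (i, True) = (\<lambda>i. if c i \<noteq> 0 then 1 else 0) i) \<and>
        (\<forall>i. i \<notin> P \<longrightarrow> m (i, False) = 0 \<and> m (i, True) = 0)"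
  proof (intro allI impI)
    fix m assume "pc P c m \<noteq> 0"
    then obtain g where g: "g \<in> {g\<in>P. c g \<noteq> 0}" "m = mon P c g" using pc_supp[OF fin] by blast
    show "(\<forall>i\<in>P. m (i, False) + m (i, True) = (\<lambda>i. if c i \<noteq> 0 then 1 else 0) i) \<and>
        (\<forall>i. i \<notin> P \<longrightarrow> m (i, False) = 0 \<and> m (i, True) = 0)"
      using g by (auto simp: mon_def)
  qed
  define deg :: "real ^ 'a \<Rightarrow> nat" where "deg = (\<lambda>i. if c i \<noteq> 0 then 1 else 0)"
  have 3: "\<forall>m. pc P c m \<noteq> 0 \<longrightarrow>
        (\<forall>i\<in>P. m (i, False) + m (i, True) = deg i) \<and>
        (\<forall>i. i \<notin> P \<longrightarrow> m (i, False) = 0 \<and> m (i, True) = 0)"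
    using 2 unfolding deg_def .
  show ?thesis unfolding mhpoly_def using 1 3 by blast
qed

definition vanish :: "(real ^ 'n) set \<Rightarrow> (real ^ 'n \<Rightarrow> complex) \<Rightarrow> bool" where
  "vanish P c \<longleftrightarrow> (\<forall>h :: complex ^ 'n. (\<Sum>g\<in>P. c g * root_eval g h) = 0)"

definition Sset :: "(real ^ 'n) set \<Rightarrow> (((real ^ 'n) \<times> bool \<Rightarrow> nat) \<Rightarrow> complex) set" where
  "Sset P = pc P ` {c. vanish P c}"

lemma Zset_alt: "Zset P = {x \<in> P1pts P. \<forall>c. vanish P c \<longrightarrow> homogenize_eval P c x = 0}"
  unfolding Zset_def vanish_def ..

lemma Zset_zero: assumes fin: "finite P" shows "Zset P = zero_set P (Sset P)"
proof (rule set_eqI)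
  fix x
  have "(\<forall>c. vanish P c \<longrightarrow> homogenize_eval P c x = 0) \<longleftrightarrow> (\<forall>p\<in>Sset P. mh_eval P p x = 0)"
    unfolding Sset_def by (simp add: pc_eval[OF fin])
  thus "x \<in> Zset P \<longleftrightarrow> x \<in> zero_set P (Sset P)"
    unfolding Zset_alt zero_set_def by simp
qed

lemma Zset_closed: assumes fin: "finite P" shows "zariski_closed P (Zset P)"
  unfolding zariski_closed_def
proof (rule exI[of _ "Sset P"], rule conjI)
  show "\<forall>p\<in>Sset P. mhpoly P p" unfolding Sset_def using pc_mhpoly[OF fin] by simp
  show "Zset P = zero_set P (Sset P)" by (rule Zset_zero[OF fin])
qed

lemma cartan_Z: assumes fin: "finite P" shows "cartan_in_P1 P \<subseteq> Zset P"
proof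
  fix x assume x: "x \<in> cartan_in_P1 P"
  then obtain h :: "complex ^ 'a" where h: "\<forall>g\<in>P. \<exists>t. t \<noteq> 0 \<and> x g = (t, t * root_eval g h)"
    unfolding cartan_in_P1_def by blast
  have xP: "x \<in> P1pts P" using x unfolding cartan_in_P1_def by blast
  have fx: "fst (x g) \<noteq> 0" "snd (x g) / fst (x g) = root_eval g h" if "g \<in> P" for g
    using h that by auto
  show "x \<in> Zset P" unfolding Zset_def
  proof (intro CollectI conjI allI impI xP)
    fix c :: "real ^ 'a \<Rightarrow> complex"
    assume c: "\<forall>h. (\<Sum>g\<in>P. c g * root_eval g h) = 0"
    have "homogenize_eval P c x = (\<Prod>g\<in>{g\<in>P. c g \<noteq> 0}. fst (x g)) *
       (\<Sum>g\<in>{g\<in>P. c g \<noteq> 0}. c g * (snd (x g) / fst (x g)))"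
      by (rule hom_finite[OF fin]) (auto simp: fx)
    also have "(\<Sum>g\<in>{g\<in>P. c g \<noteq> 0}. c g * (snd (x g) / fst (x g)))
             = (\<Sum>g\<in>{g\<in>P. c g \<noteq> 0}. c g * root_eval g h)"
      by (rule sum.cong) (auto simp: fx)
    also have "\<dots> = (\<Sum>g\<in>P. c g * root_eval g h)"
      using fin by (intro sum.mono_neutral_left) auto
    also have "\<dots> = 0" using c by blast
    finally show "homogenize_eval P c x = 0" by simp
  qed
qed

lemma closure_Z: assumes fin: "finite P" shows "zariski_closure P (cartan_in_P1 P) \<subseteq> Zset P"
  unfolding zariski_closure_def
  by (intro Inter_lower CollectI conjI Zset_closed[OF fin] cartan_Z[OF fin])




lemma Z_sub:
  fixes P :: "(real ^ 'n) set"
  assumes fin: "finite P" and xZ: "x \<in> Zset P"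
  shows "x \<in> zariski_closure P (cartan_in_P1 P)"
proof -
  have xP: "x \<in> P1pts P" using xZ unfolding Zset_def by blast
  have Zc: "\<And>c. vanish P c \<Longrightarrow> homogenize_eval P c x = 0" using xZ unfolding Zset_alt by blast
  have nz: "\<And>g. g \<in> P \<Longrightarrow> x g \<noteq> (0, 0)" and out: "\<And>g. g \<notin> P \<Longrightarrow> x g = (0, 0)"
    using xP unfolding P1pts_def by auto
  define T where "T = {g\<in>P. fst (x g) = 0}"
  define F where "F = {g\<in>P. fst (x g) \<noteq> 0}"
  have finT: "finite T" and finF: "finite F" using fin by (auto simp: T_def F_def)
  have FP: "F \<subseteq> P" by (auto simp: F_def)
  have sT: "\<And>g. g \<in> T \<Longrightarrow> snd (x g) \<noteq> 0"
  proof -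
    fix g assume g: "g \<in> T"
    hence "fst (x g) = 0" "g \<in> P" by (auto simp: T_def)
    thus "snd (x g) \<noteq> 0" using nz[of g] by (metis prod.collapse)
  qed
  have Zreal: "homogenize_eval P (\<lambda>g. complex_of_real (c g)) x = 0"
    if "(\<Sum>g\<in>P. c g *\<^sub>R g) = 0" for c :: "real ^ 'n \<Rightarrow> real"
    by (rule Zc) (simp add: vanish_def re_sum_zero[OF that])
  have restr: "(\<Sum>g\<in>P. (if g \<in> F then c g else 0) *\<^sub>R g) = (\<Sum>g\<in>F. c g *\<^sub>R g)" for c :: "real ^ 'n \<Rightarrow> real"
  proof -
    have "(\<Sum>g\<in>P. (if g \<in> F then c g else 0) *\<^sub>R g) = (\<Sum>g\<in>P. if g \<in> F then c g *\<^sub>R g else 0)"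
      by (rule sum.cong) auto
    also have "\<dots> = (\<Sum>g\<in>P \<inter> F. c g *\<^sub>R g)" using fin by (simp add: sum.inter_restrict)
    finally show ?thesis using FP by (simp add: Int_absorb1)
  qed
  define a where "a g = snd (x g) / fst (x g)" for g
  have cF: "(\<Sum>l\<in>F. complex_of_real (c l) * a l) = 0" if c: "(\<Sum>l\<in>F. c l *\<^sub>R l) = 0" for c
  proof -
    define c' where "c' g = (if g \<in> F then c g else 0)" for g
    have "(\<Sum>g\<in>P. c' g *\<^sub>R g) = 0" unfolding c'_def restr c ..
    hence h: "homogenize_eval P (\<lambda>g. complex_of_real (c' g)) x = 0" by (rule Zreal)
    let ?S = "{g\<in>P. complex_of_real (c' g) \<noteq> 0}"
    have SF: "?S \<subseteq> F" by (auto simp: c'_def split: if_splits)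
    have fS: "\<forall>g\<in>?S. fst (x g) \<noteq> 0" using SF by (auto simp: F_def)
    have "homogenize_eval P (\<lambda>g. complex_of_real (c' g)) x =
      (\<Prod>g\<in>?S. fst (x g)) * (\<Sum>g\<in>?S. complex_of_real (c' g) * (snd (x g) / fst (x g)))"
      by (rule hom_finite[OF fin]) (use fS in blast)
    moreover have "(\<Prod>g\<in>?S. fst (x g)) \<noteq> 0" using fS fin by simp
    ultimately have e: "(\<Sum>g\<in>?S. complex_of_real (c' g) * a g) = 0" using h by (simp add: a_def)
    have "(\<Sum>l\<in>F. complex_of_real (c l) * a l) = (\<Sum>l\<in>F. complex_of_real (c' l) * a l)"
      by (rule sum.cong) (auto simp: c'_def)
    also have "\<dots> = (\<Sum>g\<in>?S. complex_of_real (c' g) * a g)"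
      by (rule sum.mono_neutral_right[OF finF SF]) (use FP in auto)
    finally show ?thesis using e by simp
  qed
  have "\<exists>w. \<forall>l\<in>F. l \<bullet> w = Re (a l)"
  proof (rule solve_real[OF finF])
    fix c assume "(\<Sum>l\<in>F. c l *\<^sub>R l) = 0"
    hence "Re (\<Sum>l\<in>F. complex_of_real (c l) * a l) = 0" using cF by simp
    thus "(\<Sum>l\<in>F. c l * Re (a l)) = 0" by (simp add: Re_sum)
  qed
  then obtain wr where wr: "\<forall>l\<in>F. l \<bullet> wr = Re (a l)" by blast
  have "\<exists>w. \<forall>l\<in>F. l \<bullet> w = Im (a l)"
  proof (rule solve_real[OF finF])
    fix c assume "(\<Sum>l\<in>F. c l *\<^sub>R l) = 0"
    hence "Im (\<Sum>l\<in>F. complex_of_real (c l) * a l) = 0" using cF by simp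
    thus "(\<Sum>l\<in>F. c l * Im (a l)) = 0" by (simp add: Im_sum)
  qed
  then obtain wi where wi: "\<forall>l\<in>F. l \<bullet> wi = Im (a l)" by blast
  define h0 where "h0 = (\<chi> i. cv wr $ i + \<i> * cv wi $ i)"
  have h0: "root_eval l h0 = a l" if "l \<in> F" for l
  proof -
    have "root_eval l h0 = complex_of_real (Re (a l)) + \<i> * complex_of_real (Im (a l))"
      unfolding h0_def re_lin re_real using wr wi that by simp
    also have "\<dots> = a l" using complex_eq by metis
    finally show ?thesis .
  qed
  have notspan: "m \<notin> span F" if m: "m \<in> T" for m
  proof
    assume "m \<in> span F"
    then obtain u where u: "(\<Sum>l\<in>F. u l *\<^sub>R l) = m" using span_finite[OF finF] by auto
    have mP: "m \<in> P" and mF: "m \<notin> F" and fm: "fst (x m) = 0" using m by (auto simp: T_def F_def)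
    define c where "c g = (if g = m then 1 else 0) - (if g \<in> F then u g else 0)" for g
    have d1: "(\<Sum>g\<in>P. (if g = m then 1 else 0) *\<^sub>R g) = m"
    proof -
      have "(\<Sum>g\<in>P. (if g = m then 1 else 0) *\<^sub>R g) = (\<Sum>g\<in>P. if g = m then g else 0)"
        by (rule sum.cong) auto
      thus ?thesis using mP fin by simp
    qed
    have "(\<Sum>g\<in>P. c g *\<^sub>R g) = (\<Sum>g\<in>P. (if g = m then 1 else 0) *\<^sub>R g) - (\<Sum>g\<in>P. (if g \<in> F then u g else 0) *\<^sub>R g)"
      unfolding c_def by (simp add: scaleR_diff_left sum_subtractf)
    also have "\<dots> = 0" unfolding d1 restr u by simp
    finally have h: "homogenize_eval P (\<lambda>g. complex_of_real (c g)) x = 0" by (rule Zreal)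
    let ?S = "{g\<in>P. complex_of_real (c g) \<noteq> 0}"
    have finS: "finite ?S" using fin by simp
    have cm: "c m = 1" using mF by (simp add: c_def)
    have mS: "m \<in> ?S" using mP cm by simp
    have SF: "g \<in> F" if "g \<in> ?S - {m}" for g using that by (auto simp: c_def split: if_splits)
    have rest: "(\<Sum>g\<in>?S - {m}. complex_of_real (c g) * snd (x g) * (\<Prod>k\<in>?S - {g}. fst (x k))) = 0"
    proof (rule sum.neutral, rule ballI)
      fix g assume g: "g \<in> ?S - {m}"
      have "(\<Prod>k\<in>?S - {g}. fst (x k)) = 0"
        using finS mS g fm by (intro prod_zero) auto
      thus "complex_of_real (c g) * snd (x g) * (\<Prod>k\<in>?S - {g}. fst (x k)) = 0" by simp
    qed
    have "homogenize_eval P (\<lambda>g. complex_of_real (c g)) x =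
       complex_of_real (c m) * snd (x m) * (\<Prod>k\<in>?S - {m}. fst (x k))"
      unfolding hom_eq sum.remove[OF finS mS] rest by simp
    moreover have "(\<Prod>k\<in>?S - {m}. fst (x k)) \<noteq> 0"
      using finS SF by (auto simp: F_def)
    moreover have "snd (x m) \<noteq> 0" using sT m by blast
    ultimately show False using h cm by simp
  qed
  have "\<forall>m\<in>T. \<exists>h. (\<forall>l\<in>F. root_eval l h = 0) \<and> root_eval m h \<noteq> 0"
  proof
    fix m assume "m \<in> T"
    then obtain w where w: "\<forall>l\<in>F. l \<bullet> w = 0" "m \<bullet> w = 1" using sep_real[OF finF notspan] by blast
    show "\<exists>h. (\<forall>l\<in>F. root_eval l h = 0) \<and> root_eval m h \<noteq> 0"
      by (rule exI[of _ "cv w"]) (simp add: re_real w)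
  qed
  then obtain h1 where h1F: "\<forall>l\<in>F. root_eval l h1 = 0" and h1T: "\<forall>m\<in>T. root_eval m h1 \<noteq> 0"
    using generic[OF finT] by blast
  define k where "k g = snd (x g) / root_eval g h1" for g
  define A where "A g u = (if g \<in> T then k g * u else fst (x g))" for g u
  define B where "B g u = (if g \<in> T then k g * (u * root_eval g h0 + root_eval g h1) else snd (x g))" for g u
  show ?thesis
  proof (rule curve_closure[of x P A B])
    show "x \<in> P1pts P" by (rule xP)
  next
    fix g show "isCont (A g) 0" unfolding A_def by (cases "g \<in> T") simp_all
  next
    fix g show "isCont (B g) 0" unfolding B_def by (cases "g \<in> T") simp_all
  next
    fix g show "x g = (A g 0, B g 0)"
    proof (cases "g \<in> T")
      case True
      thus ?thesis using h1T unfolding A_def B_def k_def T_def by (simp add: prod_eq_iff)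
    next
      case False thus ?thesis unfolding A_def B_def by simp
    qed
  next
    fix u :: complex assume u: "u \<noteq> 0"
    define h where "h = (\<chi> i. h0 $ i + (1 / u) * h1 $ i)"
    have reh: "root_eval g h = root_eval g h0 + (1 / u) * root_eval g h1" for g
      unfolding h_def re_lin ..
    have kT: "k g \<noteq> 0" if "g \<in> T" for g using sT h1T that by (simp add: k_def)
    have good: "\<exists>t. t \<noteq> 0 \<and> (A g u, B g u) = (t, t * root_eval g h)" if g: "g \<in> P" for g
    proof (cases "g \<in> T")
      case True
      show ?thesis
        by (rule exI[of _ "k g * u"]) (use True kT u in \<open>simp add: A_def B_def reh field_simps\<close>)
    next
      case False
      hence gF: "g \<in> F" and fx: "fst (x g) \<noteq> 0" using g by (auto simp: T_def F_def)
      show ?thesis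
        by (rule exI[of _ "fst (x g)"]) (use False gF fx h1F h0[OF gF] in \<open>simp add: A_def B_def reh a_def\<close>)
    qed
    have "(\<lambda>g. (A g u, B g u)) \<in> P1pts P"
      unfolding P1pts_def
    proof (intro CollectI conjI ballI allI impI)
      fix g assume "g \<in> P" thus "(A g u, B g u) \<noteq> (0, 0)" using good by fastforce
    next
      fix g assume "g \<notin> P"
      hence "g \<notin> T" by (simp add: T_def)
      thus "(A g u, B g u) = (0, 0)" using out[OF \<open>g \<notin> P\<close>] by (simp add: A_def B_def)
    qed
    thus "(\<lambda>g. (A g u, B g u)) \<in> cartan_in_P1 P"
      unfolding cartan_in_P1_def using good by blast
  qed
qed


theorem mainTheorem4:
  fixes \<Phi> \<Phi>p :: "(real ^ 'n) set"
  assumes "root_system \<Phi>" and "positive_system \<Phi> \<Phi>p"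
  shows "Zset \<Phi>p = zariski_closure \<Phi>p (cartan_in_P1 \<Phi>p)"
proof -
  have "finite \<Phi>" using assms(1) unfolding root_system_def by blast
  moreover have "\<Phi>p \<subseteq> \<Phi>" using assms(2) unfolding positive_system_def by blast
  ultimately have fin: "finite \<Phi>p" by (rule finite_subset[rotated])
  show ?thesis using closure_Z[OF fin] Z_sub[OF fin] by blast
qed

end
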